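(* Assume that $b_0 + \sum_{i \in [n]} b_i f_i(x_i) >0$ for every $x \in \mathcal{X}$. If the unary binarization formulation $\{(x,z) : Ax \geq b,\ x_i = p_{i0} + \sum_{j \in [d_i]} (p_{ij} - p_{i,j-1}) z_{ij},\ 1 \geq z_{i1} \geq z_{i2} \geq \cdots \geq z_{id_i} \geq 0,\ z_i \in \{0,1\}^{d_i} \text{ for } i \in [n]\}$ is ideal and, for $i \in [n]$, $g_i(x_i) = 0$, then a linear programming formulation of the problem $$\max \Big\{ \frac{ a_0 + \sum_{i \in [n]}a_i f_i(x_i)}{b_0 + \sum_{i \in [n]} b_i f_i(x_i)} + \sum_{i \in [n]} g_i(x_i) \ \Big|\ x \in P \cap \mathcal{X} \Big\}$$ is given as follows: $$\begin{aligned} \max \quad &a_0 \rho + \sum_{i \in [n]}a_i \mu_i \\ \text{s.t.} \quad & b_0\rho + \sum_{i \in [n]} b_i\mu_i = 1 \\ & \mu_i = f_i(p_{i0}) \cdot \rho + \sum_{j \in [d_i]} \big(f_i(p_{ij}) - f_{i}(p_{i,j-1})\big) \cdot s_{ij} && \text{for } i \in [n] \\ & \rho \geq s_{i1} \geq s_{i2} \geq \cdots \geq s_{id_i} \geq 0 && \text{for } i \in [n] \\ &A y \geq b\rho \quad \text{and} \quad y_i = p_{i0} \cdot \rho + \sum_{j \in [d_i]} (p_{ij} - p_{i,j-1}) \cdot s_{ij} && \text{for } i \in [n]. \end{aligned}$$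
   Context: Let $\mathcal{X} = \prod_{i\in[n]} \{p_{i0}, p_{i1}, \ldots, p_{id_i}\}$ with real $p_{i0} < p_{i1} < \cdots < p_{id_i}$ and positive integers $d_i$, and let $P = \{x \in \mathbb{R}^n : Ax \geq b\}$ be a polytope. Let $a_0,\dots,a_n$ be real numbers, $b_0,\dots,b_n$ nonnegative real numbers, and $f_i, g_i$ univariate functions on $\{p_{i0},\dots,p_{id_i}\}$. An MIP formulation is called ideal if every vertex of its LP relaxation (obtained by dropping integrality) has binary values for the integer-constrained variables. Here $\rho$ plays the role of $1/(b_0+\sum_i b_i f_i(x_i))$, $\mu_i$ of $f_i(x_i)\rho$, $s_{ij}$ of $z_{ij}\rho$, and $y_i$ of $x_i\rho$. *)

theory Defs
  imports Complex_Main
begin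

(* Conventions: [n] = {0..<n}; vectors in R^n are nat => real (only indices < n matter);
   variable z_{ij} is z i j for j in {1..d i}; grid points p i j for j in {0..d i};
   matrix A has m rows, A k i, right-hand side rhs k. *)

definition grid :: "nat \<Rightarrow> (nat \<Rightarrow> nat) \<Rightarrow> (nat \<Rightarrow> nat \<Rightarrow> real) \<Rightarrow> (nat \<Rightarrow> real) set" where
  "grid n d p = {x. (\<forall>i<n. \<exists>j\<le>d i. x i = p i j) \<and> (\<forall>i\<ge>n. x i = 0)}"

definition polyP :: "nat \<Rightarrow> nat \<Rightarrow> (nat \<Rightarrow> nat \<Rightarrow> real) \<Rightarrow> (nat \<Rightarrow> real) \<Rightarrow> (nat \<Rightarrow> real) set" where
  "polyP n m A rhs = {x. \<forall>k<m. (\<Sum>i<n. A k i * x i) \<ge> rhs k}"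

definition unary_relax ::
  "nat \<Rightarrow> (nat \<Rightarrow> nat) \<Rightarrow> (nat \<Rightarrow> nat \<Rightarrow> real) \<Rightarrow> nat \<Rightarrow> (nat \<Rightarrow> nat \<Rightarrow> real) \<Rightarrow> (nat \<Rightarrow> real)
   \<Rightarrow> ((nat \<Rightarrow> real) \<times> (nat \<Rightarrow> nat \<Rightarrow> real)) set" where
  "unary_relax n d p m A rhs = {(x, z).
     (\<forall>k<m. (\<Sum>i<n. A k i * x i) \<ge> rhs k) \<and>
     (\<forall>i<n. x i = p i 0 + (\<Sum>j=1..d i. (p i j - p i (j - 1)) * z i j)) \<and>
     (\<forall>i<n. 1 \<ge> z i 1 \<and> (\<forall>j. 1 \<le> j \<and> j < d i \<longrightarrow> z i j \<ge> z i (Suc j)) \<and> z i (d i) \<ge> 0) \<and>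
     (\<forall>i\<ge>n. x i = 0) \<and>
     (\<forall>i j. (i \<ge> n \<or> j = 0 \<or> j > d i) \<longrightarrow> z i j = 0)}"

definition is_vertex :: "((nat \<Rightarrow> real) \<times> (nat \<Rightarrow> nat \<Rightarrow> real)) set
     \<Rightarrow> (nat \<Rightarrow> real) \<times> (nat \<Rightarrow> nat \<Rightarrow> real) \<Rightarrow> bool" where
  "is_vertex S v \<longleftrightarrow> v \<in> S \<and>
     \<not> (\<exists>u\<in>S. \<exists>w\<in>S. \<exists>t::real. 0 < t \<and> t < 1 \<and> u \<noteq> w \<and>
          fst v = (\<lambda>i. (1 - t) * fst u i + t * fst w i) \<and>
          snd v = (\<lambda>i j. (1 - t) * snd u i j + t * snd w i j))"

definition unary_ideal ::
  "nat \<Rightarrow> (nat \<Rightarrow> nat) \<Rightarrow> (nat \<Rightarrow> nat \<Rightarrow> real) \<Rightarrow> nat \<Rightarrow> (nat \<Rightarrow> nat \<Rightarrow> real) \<Rightarrow> (nat \<Rightarrow> real) \<Rightarrow> bool" where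
  "unary_ideal n d p m A rhs \<longleftrightarrow>
     (\<forall>v. is_vertex (unary_relax n d p m A rhs) v \<longrightarrow>
        (\<forall>i<n. \<forall>j\<in>{1..d i}. snd v i j \<in> {0, 1}))"

definition lp_feasible ::
  "nat \<Rightarrow> (nat \<Rightarrow> nat) \<Rightarrow> (nat \<Rightarrow> nat \<Rightarrow> real) \<Rightarrow> nat \<Rightarrow> (nat \<Rightarrow> nat \<Rightarrow> real) \<Rightarrow> (nat \<Rightarrow> real)
   \<Rightarrow> real \<Rightarrow> (nat \<Rightarrow> real) \<Rightarrow> (nat \<Rightarrow> real \<Rightarrow> real)
   \<Rightarrow> (real \<times> (nat \<Rightarrow> real) \<times> (nat \<Rightarrow> nat \<Rightarrow> real) \<times> (nat \<Rightarrow> real)) set" where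
  "lp_feasible n d p m A rhs b0 b f = {(\<rho>, \<mu>, s, y).
     b0 * \<rho> + (\<Sum>i<n. b i * \<mu> i) = 1 \<and>
     (\<forall>i<n. \<mu> i = f i (p i 0) * \<rho> + (\<Sum>j=1..d i. (f i (p i j) - f i (p i (j - 1))) * s i j)) \<and>
     (\<forall>i<n. \<rho> \<ge> s i 1 \<and> (\<forall>j. 1 \<le> j \<and> j < d i \<longrightarrow> s i j \<ge> s i (Suc j)) \<and> s i (d i) \<ge> 0) \<and>
     (\<forall>k<m. (\<Sum>i<n. A k i * y i) \<ge> rhs k * \<rho>) \<and>
     (\<forall>i<n. y i = p i 0 * \<rho> + (\<Sum>j=1..d i. (p i j - p i (j - 1)) * s i j))}"

definition lp_obj :: "nat \<Rightarrow> real \<Rightarrow> (nat \<Rightarrow> real)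
   \<Rightarrow> real \<times> (nat \<Rightarrow> real) \<times> (nat \<Rightarrow> nat \<Rightarrow> real) \<times> (nat \<Rightarrow> real) \<Rightarrow> real" where
  "lp_obj n a0 a w = (case w of (\<rho>, \<mu>, s, y) \<Rightarrow> a0 * \<rho> + (\<Sum>i<n. a i * \<mu> i))"

definition frac_obj :: "nat \<Rightarrow> real \<Rightarrow> (nat \<Rightarrow> real) \<Rightarrow> real \<Rightarrow> (nat \<Rightarrow> real)
   \<Rightarrow> (nat \<Rightarrow> real \<Rightarrow> real) \<Rightarrow> (nat \<Rightarrow> real \<Rightarrow> real) \<Rightarrow> (nat \<Rightarrow> real) \<Rightarrow> real" where
  "frac_obj n a0 a b0 b f g x =
     (a0 + (\<Sum>i<n. a i * f i (x i))) / (b0 + (\<Sum>i<n. b i * f i (x i))) + (\<Sum>i<n. g i (x i))"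

end

theory Submission
  imports Defs
begin

definition cmb :: "real \<Rightarrow> (nat\<Rightarrow>real)\<times>(nat\<Rightarrow>nat\<Rightarrow>real) \<Rightarrow> (nat\<Rightarrow>real)\<times>(nat\<Rightarrow>nat\<Rightarrow>real) \<Rightarrow> (nat\<Rightarrow>real)\<times>(nat\<Rightarrow>nat\<Rightarrow>real)" where
"cmb t u w = ((\<lambda>i. (1 - t) * fst u i + t * fst w i), (\<lambda>i j. (1 - t) * snd u i j + t * snd w i j))"

lemma is_vertex_cmb: "is_vertex S v \<longleftrightarrow> v \<in> S \<and> \<not>(\<exists>u\<in>S. \<exists>w\<in>S. \<exists>t. 0<t \<and> t<1 \<and> u \<noteq> w \<and> v = cmb t u w)"
  unfolding is_vertex_def cmb_def by (auto simp: prod_eq_iff)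

lemma cmb_swap: "cmb (1 - t) w u = cmb t u w"
  by (simp add: cmb_def algebra_simps)

lemma vertex_exists:
  fixes S :: "((nat\<Rightarrow>real)\<times>(nat\<Rightarrow>nat\<Rightarrow>real)) set" and K :: "'k set"
  assumes fin: "finite K"
    and S: "S = {v. Q v \<and> (\<forall>k\<in>K. 0 \<le> g k v)}"
    and Qaff: "\<And>u w t. Q u \<Longrightarrow> Q w \<Longrightarrow> Q (cmb t u w)"
    and gaff: "\<And>k u w t. g k (cmb t u w) = (1-t) * g k u + t * g k w"
    and paff: "\<And>u w t. \<phi> (cmb t u w) = (1-t) * \<phi> u + t * \<phi> w"
    and bnd: "\<And>u w. u\<in>S \<Longrightarrow> w\<in>S \<Longrightarrow> u\<noteq>w \<Longrightarrow> \<exists>T>1. cmb T u w \<notin> S"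
  shows "x\<in>S \<Longrightarrow> \<exists>v. is_vertex S v \<and> \<phi> v \<le> \<phi> x"
proof (induction "card {k\<in>K. 0 < g k x}" arbitrary: x rule: less_induct)
  case (less x)
  show ?case
  proof (cases "is_vertex S x")
    case True then show ?thesis by blast
  next
    case False
    then obtain u0 w0 t0 where u0: "u0\<in>S" and w0: "w0\<in>S" and t0: "0<t0" "t0<1" and uw0: "u0\<noteq>w0"
       and x0: "x = cmb t0 u0 w0"
      using less.prems unfolding is_vertex_cmb by blast
    obtain u w t where u: "u\<in>S" and w: "w\<in>S" and t: "0<t" "t<1" and uw: "u\<noteq>w"
        and xe: "x = cmb t u w" and phi: "\<phi> w \<le> \<phi> u"
    proof (cases "\<phi> w0 \<le> \<phi> u0")
      case True then show ?thesis using that u0 w0 t0 uw0 x0 by blast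
    next
      case False then show ?thesis using that[of w0 u0 "1 - t0"] u0 w0 t0 uw0 x0 cmb_swap by auto
    qed
    obtain T where T: "T > 1" "cmb T u w \<notin> S" using bnd u w uw by blast
    have QT: "Q (cmb T u w)" using Qaff u w S by auto
    then obtain k0 where k0: "k0 \<in> K" "g k0 (cmb T u w) < 0" using T S by auto
    have gu: "\<And>k. k\<in>K \<Longrightarrow> 0 \<le> g k u" and gw: "\<And>k. k\<in>K \<Longrightarrow> 0 \<le> g k w" using u w S by auto
    define D where "D = {k\<in>K. g k w < g k u}"
    have k0D: "k0 \<in> D"
    proof (rule ccontr)
      assume "k0 \<notin> D"
      hence le: "g k0 u \<le> g k0 w" using k0 D_def by auto
      hence "0 \<le> (T - 1) * (g k0 w - g k0 u)" using T by (simp add: zero_le_mult_iff)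
      moreover have "(1 - T) * g k0 u + T * g k0 w = g k0 w + (T - 1) * (g k0 w - g k0 u)" by (simp add: algebra_simps)
      ultimately have "g k0 u \<le> (1 - T) * g k0 u + T * g k0 w" using le by linarith
      thus False using k0 gaff[of k0 T u w] gu[OF k0(1)] by linarith
    qed
    have finD: "finite D" using fin D_def by auto
    define r where "r k = g k u / (g k u - g k w)" for k
    define s where "s = Min (r ` D)"
    obtain k1 where k1: "k1 \<in> D" "r k1 = s"
    proof -
      have "Min (r ` D) \<in> r ` D" using finD k0D by (intro Min_in) auto
      thus ?thesis using that unfolding s_def by auto
    qed
    have sle: "\<And>k. k\<in>D \<Longrightarrow> s \<le> r k" unfolding s_def using finD by auto
    have rgt: "t < r k" if kD: "k \<in> D" for k
    proof -
      have kK: "k \<in> K" and lt: "g k w < g k u" using kD D_def by auto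
      have "t * (g k u - g k w) < g k u" using t gw[OF kK] lt
        by (smt (verit, best) mult_less_cancel_right2 mult_nonneg_nonneg)
      thus ?thesis unfolding r_def using lt by (simp add: pos_less_divide_eq)
    qed
    have st: "t < s" using rgt k1 by auto
    define y where "y = cmb s u w"
    have gy: "g k y = g k u + s * (g k w - g k u)" for k unfolding y_def gaff by (simp add: algebra_simps)
    have gx: "g k x = g k u + t * (g k w - g k u)" for k unfolding xe gaff by (simp add: algebra_simps)
    have yS: "y \<in> S"
    proof -
      have "Q y" using Qaff u w S y_def by auto
      moreover have "0 \<le> g k y" if kK: "k \<in> K" for k
      proof (cases "k \<in> D")
        case True
        hence lt: "g k w < g k u" using D_def by auto
        have "s \<le> g k u / (g k u - g k w)" using sle[OF True] r_def by simp
        hence "s * (g k u - g k w) \<le> g k u" using lt by (simp add: pos_le_divide_eq)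
        thus ?thesis unfolding gy by (simp add: algebra_simps)
      next
        case False
        hence "g k u \<le> g k w" using D_def kK by auto
        moreover have "0 \<le> s" using st t by auto
        ultimately show ?thesis unfolding gy using gu[OF kK] by (simp add: mult_nonneg_nonneg)
      qed
      ultimately show ?thesis using S by auto
    qed
    have sub: "{k\<in>K. 0 < g k y} \<subset> {k\<in>K. 0 < g k x}"
    proof
      show "{k\<in>K. 0 < g k y} \<subseteq> {k\<in>K. 0 < g k x}"
      proof clarify
        fix k assume kK: "k \<in> K" and py: "0 < g k y"
        show "0 < g k x"
        proof (rule ccontr)
          assume "\<not> 0 < g k x"
          hence "(1 - t) * g k u + t * g k w = 0" using gaff[of k t u w] xe less.prems S kK by fastforce
          moreover have "0 \<le> (1 - t) * g k u" "0 \<le> t * g k w" using t gu[OF kK] gw[OF kK] by auto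
          ultimately have "(1 - t) * g k u = 0" "t * g k w = 0" by linarith+
          hence "g k u = 0" "g k w = 0" using t by auto
          thus False using py gy by simp
        qed
      qed
      have "k1 \<notin> {k\<in>K. 0 < g k y}"
      proof -
        have lt: "g k1 w < g k1 u" using k1 D_def by auto
        have "s = g k1 u / (g k1 u - g k1 w)" using k1 r_def by simp
        hence "g k1 y = 0" unfolding gy using lt by (simp add: field_simps)
        thus ?thesis by simp
      qed
      moreover have "k1 \<in> {k\<in>K. 0 < g k x}"
      proof -
        have kK: "k1 \<in> K" and lt: "g k1 w < g k1 u" using k1 D_def by auto
        have "0 < (1 - t) * g k1 u" using t lt gw[OF kK] by auto
        moreover have "0 \<le> t * g k1 w" using t gw[OF kK] by auto
        ultimately show ?thesis using kK gaff[of k1 t u w] xe by auto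
      qed
      ultimately show "{k\<in>K. 0 < g k y} \<noteq> {k\<in>K. 0 < g k x}" by blast
    qed
    have "card {k\<in>K. 0 < g k y} < card {k\<in>K. 0 < g k x}"
      using sub fin by (intro psubset_card_mono) auto
    then obtain v where v: "is_vertex S v" "\<phi> v \<le> \<phi> y" using less.hyps yS by blast
    have "\<phi> y \<le> \<phi> x"
    proof -
      have "\<phi> y = \<phi> u + s * (\<phi> w - \<phi> u)" unfolding y_def paff by (simp add: algebra_simps)
      moreover have "\<phi> x = \<phi> u + t * (\<phi> w - \<phi> u)" unfolding xe paff by (simp add: algebra_simps)
      moreover have "s * (\<phi> w - \<phi> u) \<le> t * (\<phi> w - \<phi> u)" using st phi
        by (simp add: mult_right_mono_neg)
      ultimately show ?thesis by linarith
    qed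
    thus ?thesis using v by (intro exI[of _ v]) auto
  qed
qed

definition interp :: "nat \<Rightarrow> (nat \<Rightarrow> real) \<Rightarrow> (nat \<Rightarrow> real) \<Rightarrow> real" where
  "interp D q z = q 0 + (\<Sum>j=1..D. (q j - q (j - 1)) * z j)"

definition relQ where
  "relQ n d p v \<longleftrightarrow> (\<forall>i<n. fst v i = interp (d i) (p i) (snd v i)) \<and> (\<forall>i. n \<le> i \<longrightarrow> fst v i = 0) \<and>
     (\<forall>i j. (n \<le> i \<or> j = 0 \<or> d i < j) \<longrightarrow> snd v i j = 0)"

definition relK :: "nat \<Rightarrow> nat \<Rightarrow> (nat \<Rightarrow> nat) \<Rightarrow> (nat \<times> nat \<times> nat) set" where
  "relK n m d = (\<lambda>k. (0,k,0)) ` {..<m} \<union> (\<lambda>i. (1,i,0)) ` {..<n} \<union>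
      (\<lambda>(i,j). (2,i,j)) ` (SIGMA i:{..<n}. {1..<d i}) \<union> (\<lambda>i. (3,i,0)) ` {..<n}"

definition relg :: "nat \<Rightarrow> (nat \<Rightarrow> nat \<Rightarrow> real) \<Rightarrow> (nat \<Rightarrow> real) \<Rightarrow> (nat \<Rightarrow> nat) \<Rightarrow> nat \<times> nat \<times> nat
   \<Rightarrow> (nat\<Rightarrow>real)\<times>(nat\<Rightarrow>nat\<Rightarrow>real) \<Rightarrow> real" where
  "relg n A rhs d k v = (case k of (c,i,j) \<Rightarrow>
     if c = 0 then (\<Sum>l<n. A i l * fst v l) - rhs i
     else if c = 1 then 1 - snd v i 1
     else if c = 2 then snd v i j - snd v i (Suc j)
     else snd v i (d i))"

lemma relK_iff: "(\<forall>k\<in>relK n m d. 0 \<le> relg n A rhs d k v) \<longleftrightarrow>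
   (\<forall>k<m. (\<Sum>i<n. A k i * fst v i) \<ge> rhs k) \<and> (\<forall>i<n. snd v i 1 \<le> 1) \<and>
   (\<forall>i<n. \<forall>j. 1 \<le> j \<and> j < d i \<longrightarrow> snd v i (Suc j) \<le> snd v i j) \<and> (\<forall>i<n. 0 \<le> snd v i (d i))"
  unfolding relK_def ball_Un Ball_image_comp by (auto simp: relg_def o_def Ball_def)

lemma relax_eq: "unary_relax n d p m A rhs = {v. relQ n d p v \<and> (\<forall>k\<in>relK n m d. 0 \<le> relg n A rhs d k v)}"
  unfolding relK_iff unfolding unary_relax_def relQ_def interp_def
  by (auto simp: not_le)

lemma interp_cmb: "interp D q (\<lambda>j. (1 - t) * z1 j + t * z2 j) = (1 - t) * interp D q z1 + t * interp D q z2"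
proof -
  have "(\<Sum>j=1..D. (q j - q (j - 1)) * ((1 - t) * z1 j + t * z2 j)) =
        (1 - t) * (\<Sum>j=1..D. (q j - q (j - 1)) * z1 j) + t * (\<Sum>j=1..D. (q j - q (j - 1)) * z2 j)"
    unfolding sum_distrib_left sum.distrib[symmetric] by (rule sum.cong) (auto simp: algebra_simps)
  thus ?thesis unfolding interp_def by (simp add: algebra_simps)
qed

lemma relQ_aff: "relQ n d p u \<Longrightarrow> relQ n d p w \<Longrightarrow> relQ n d p (cmb t u w)"
  unfolding relQ_def cmb_def by (simp add: interp_cmb)

lemma relg_aff: "relg n A rhs d k (cmb t u w) = (1 - t) * relg n A rhs d k u + t * relg n A rhs d k w"
  unfolding relg_def cmb_def
  by (cases k) (auto simp: sum.distrib sum_distrib_left algebra_simps sum_subtractf)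

lemma fin_relK: "finite (relK n m d)"
  unfolding relK_def by auto

lemma chain_le:
  assumes "\<forall>j. 1 \<le> j \<and> j < D \<longrightarrow> z (Suc j) \<le> (z j :: real)"
  shows "1 \<le> j \<Longrightarrow> j \<le> k \<Longrightarrow> k \<le> D \<Longrightarrow> z k \<le> z j"
proof (induction k)
  case 0 then show ?case by simp
next
  case (Suc k)
  show ?case
  proof (cases "j = Suc k")
    case True then show ?thesis by simp
  next
    case False
    hence "j \<le> k" using Suc by simp
    hence "z k \<le> z j" using Suc by simp
    moreover have "z (Suc k) \<le> z k" using assms Suc \<open>j \<le> k\<close> by auto
    ultimately show ?thesis by linarith
  qed
qed

lemma relax_bounds:
  assumes "v \<in> unary_relax n d p m A rhs"
  shows "0 \<le> snd v i j \<and> snd v i j \<le> 1"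
proof (cases "n \<le> i \<or> j = 0 \<or> d i < j")
  case True then show ?thesis using assms unfolding unary_relax_def by auto
next
  case False
  hence i: "i < n" "1 \<le> j" "j \<le> d i" by auto
  have ch: "\<forall>j. 1 \<le> j \<and> j < d i \<longrightarrow> snd v i (Suc j) \<le> snd v i j"
    and top: "snd v i 1 \<le> 1" and bot: "0 \<le> snd v i (d i)"
    using assms i unfolding unary_relax_def by auto
  have "snd v i j \<le> snd v i 1" using chain_le[OF ch, of 1 j] i by auto
  moreover have "snd v i (d i) \<le> snd v i j" using chain_le[OF ch, of j "d i"] i by auto
  ultimately show ?thesis using top bot by linarith
qed

lemma relax_bnd:
  assumes u: "u \<in> unary_relax n d p m A rhs" and w: "w \<in> unary_relax n d p m A rhs" and uw: "u \<noteq> w"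
  shows "\<exists>T>1. cmb T u w \<notin> unary_relax n d p m A rhs"
proof -
  have "snd u \<noteq> snd w"
  proof
    assume eq: "snd u = snd w"
    have "fst u i = fst w i" for i
      using u w eq unfolding unary_relax_def by (cases "i < n") (auto simp: not_less)
    hence "fst u = fst w" by auto
    thus False using eq uw by (simp add: prod_eq_iff)
  qed
  then obtain i j where ij: "snd u i j \<noteq> snd w i j" by (meson ext)
  define \<delta> where "\<delta> = snd w i j - snd u i j"
  define T where "T = 1 + 2 / \<bar>\<delta>\<bar>"
  have dn: "\<delta> \<noteq> 0" using ij \<delta>_def by auto
  have T1: "T > 1" using dn T_def by auto
  have val: "snd (cmb T u w) i j = snd w i j + (T - 1) * \<delta>" unfolding cmb_def \<delta>_def by (simp add: algebra_simps)
  have "(T - 1) * \<delta> = 2 * sgn \<delta>" unfolding T_def using dn by (simp add: sgn_if abs_if)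
  hence "snd (cmb T u w) i j < 0 \<or> snd (cmb T u w) i j > 1"
    using val relax_bounds[OF w, of i j] dn by (auto simp: sgn_if split: if_splits)
  hence "cmb T u w \<notin> unary_relax n d p m A rhs" using relax_bounds[of "cmb T u w" n d p m A rhs i j] by force
  thus ?thesis using T1 by blast
qed

lemma telescope: "(\<Sum>j=1..(J::nat). (q j - q (j - 1))) = q J - (q 0 :: real)"
  by (induction J) (auto simp: sum.cl_ivl_Suc)

lemma interp_step:
  assumes "J \<le> D" "\<forall>j\<in>{1..D}. z j = (if j \<le> J then 1 else 0)"
  shows "interp D q z = q J"
proof -
  have "(\<Sum>j=1..D. (q j - q (j - 1)) * z j) = (\<Sum>j\<in>{1..D}. if j \<le> J then q j - q (j - 1) else 0)"
    using assms(2) by (intro sum.cong) auto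
  also have "\<dots> = (\<Sum>j\<in>{j\<in>{1..D}. j \<le> J}. q j - q (j - 1))"
    by (rule sum.inter_filter[symmetric]) simp
  also have "{j\<in>{1..D}. j \<le> J} = {1..J}" using assms(1) by auto
  finally show ?thesis unfolding interp_def telescope by simp
qed

lemma chain_binary:
  assumes bin: "\<forall>j\<in>{1..D}. z j \<in> {0,1::real}" and ch: "\<forall>j. 1 \<le> j \<and> j < D \<longrightarrow> z (Suc j) \<le> z j"
  shows "\<exists>J\<le>D. \<forall>j\<in>{1..D}. z j = (if j \<le> J then 1 else 0)"
proof -
  define Z where "Z = {j\<in>{1..D}. z j = 1}"
  define J where "J = (if Z = {} then 0 else Max Z)"
  have finZ: "finite Z" unfolding Z_def by auto
  have JD: "J \<le> D" unfolding J_def using finZ by (auto simp: Z_def)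
  have "z j = (if j \<le> J then 1 else 0)" if j: "j \<in> {1..D}" for j
  proof (cases "j \<le> J")
    case True
    hence "Z \<noteq> {}" using j unfolding J_def by (auto split: if_splits)
    hence JZ: "J \<in> Z" unfolding J_def using finZ Max_in by auto
    hence "z J \<le> z j" using chain_le[OF ch, of j J] True j unfolding Z_def by auto
    thus ?thesis using JZ bin[rule_format, OF j] True unfolding Z_def by auto
  next
    case False
    have "z j \<noteq> 1"
    proof
      assume "z j = 1"
      hence "j \<in> Z" using j Z_def by auto
      hence "j \<le> J" unfolding J_def using finZ by auto
      thus False using False by simp
    qed
    thus ?thesis using bin j False by auto
  qed
  thus ?thesis using JD by blast
qed

lemma relax_binary_grid:
  assumes v: "v \<in> unary_relax n d p m A rhs" and bin: "\<forall>i<n. \<forall>j\<in>{1..d i}. snd v i j \<in> {0,1}"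
  shows "\<forall>i<n. \<exists>J\<le>d i. fst v i = p i J \<and> (\<forall>q. interp (d i) q (snd v i) = q J)"
    and "fst v \<in> polyP n m A rhs \<inter> grid n d p"
proof -
  show *: "\<forall>i<n. \<exists>J\<le>d i. fst v i = p i J \<and> (\<forall>q. interp (d i) q (snd v i) = q J)"
  proof (intro allI impI)
    fix i assume i: "i < n"
    have ch: "\<forall>j. 1 \<le> j \<and> j < d i \<longrightarrow> snd v i (Suc j) \<le> snd v i j" and xe: "fst v i = interp (d i) (p i) (snd v i)"
      using v i unfolding unary_relax_def interp_def by auto
    obtain J where J: "J \<le> d i" "\<forall>j\<in>{1..d i}. snd v i j = (if j \<le> J then 1 else 0)"
      using chain_binary[OF _ ch] bin i by blast
    show "\<exists>J\<le>d i. fst v i = p i J \<and> (\<forall>q. interp (d i) q (snd v i) = q J)"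
      using J interp_step[OF J] xe by auto
  qed
  have "fst v \<in> polyP n m A rhs" using v unfolding unary_relax_def polyP_def by auto
  moreover have "\<forall>i<n. \<exists>j\<le>d i. fst v i = p i j" using * by meson
  moreover have "\<forall>i\<ge>n. fst v i = 0" using v unfolding unary_relax_def by auto
  ultimately show "fst v \<in> polyP n m A rhs \<inter> grid n d p" unfolding grid_def by auto
qed

lemma grid_to_relax:
  assumes x: "x \<in> grid n d p" "x \<in> polyP n m A rhs"
  shows "\<exists>z. (x, z) \<in> unary_relax n d p m A rhs \<and> (\<forall>i<n. \<forall>q. interp (d i) (\<lambda>j. q (p i j)) (z i) = q (x i))"
proof -
  have "\<forall>i<n. \<exists>j\<le>d i. x i = p i j" using x unfolding grid_def by auto
  then obtain J where J: "\<And>i. i < n \<Longrightarrow> J i \<le> d i \<and> x i = p i (J i)" by metis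
  define z where "z i j = (if i < n \<and> 1 \<le> j \<and> j \<le> J i then 1 else (0::real))" for i j
  have iq: "interp (d i) q (z i) = q (J i)" if i: "i < n" for i q
    using J[OF i] i by (intro interp_step) (auto simp: z_def)
  have "(x, z) \<in> unary_relax n d p m A rhs"
    unfolding unary_relax_def
  proof (clarify, intro conjI)
    show "\<forall>k<m. rhs k \<le> (\<Sum>i<n. A k i * x i)" using x unfolding polyP_def by auto
    show "\<forall>i<n. x i = p i 0 + (\<Sum>j = 1..d i. (p i j - p i (j - 1)) * z i j)"
    proof (intro allI impI)
      fix i assume i: "i < n"
      have "interp (d i) (p i) (z i) = x i" using iq[OF i] J[OF i] by simp
      thus "x i = p i 0 + (\<Sum>j = 1..d i. (p i j - p i (j - 1)) * z i j)" by (simp add: interp_def)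
    qed
    show "\<forall>i<n. z i 1 \<le> 1 \<and> (\<forall>j. 1 \<le> j \<and> j < d i \<longrightarrow> z i (Suc j) \<le> z i j) \<and> 0 \<le> z i (d i)"
      unfolding z_def by auto
    show "\<forall>i\<ge>n. x i = 0" using x unfolding grid_def by auto
    show "\<forall>i j. n \<le> i \<or> j = 0 \<or> d i < j \<longrightarrow> z i j = 0"
    proof (intro allI impI)
      fix i j assume h: "n \<le> i \<or> j = 0 \<or> d i < j"
      show "z i j = 0"
      proof (cases "i < n")
        case True thus ?thesis using h J[OF True] by (auto simp: z_def)
      qed (auto simp: z_def)
    qed
  qed
  moreover have "\<forall>i<n. \<forall>q. interp (d i) (\<lambda>j. q (p i j)) (z i) = q (x i)"
    using iq J by auto
  ultimately show ?thesis by blast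
qed

lemma finite_grid: "finite (grid n d p)"
proof -
  have inj: "inj_on (\<lambda>x. map x [0..<n]) (grid n d p)"
  proof
    fix x y assume xy: "x \<in> grid n d p" "y \<in> grid n d p" "map x [0..<n] = map y [0..<n]"
    show "x = y"
    proof
      fix i
      show "x i = y i"
      proof (cases "i < n")
        case True
        show ?thesis using xy(3) True by simp
      next
        case False thus ?thesis using xy unfolding grid_def by auto
      qed
    qed
  qed
  define B where "B = (\<Union>i<n. p i ` {..d i})"
  have "(\<lambda>x. map x [0..<n]) ` grid n d p \<subseteq> {xs. set xs \<subseteq> B \<and> length xs = n}"
    unfolding grid_def B_def by force
  moreover have "finite {xs. set xs \<subseteq> B \<and> length xs = n}"
    by (rule finite_lists_length_eq) (auto simp: B_def)
  ultimately have "finite ((\<lambda>x. map x [0..<n]) ` grid n d p)"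
    using finite_subset by blast
  thus ?thesis using finite_imageD inj by blast
qed

definition lin :: "nat \<Rightarrow> (nat \<Rightarrow> nat) \<Rightarrow> (nat \<Rightarrow> nat \<Rightarrow> real) \<Rightarrow> real \<Rightarrow> (nat \<Rightarrow> real) \<Rightarrow> (nat \<Rightarrow> real \<Rightarrow> real)
   \<Rightarrow> (nat\<Rightarrow>real)\<times>(nat\<Rightarrow>nat\<Rightarrow>real) \<Rightarrow> real" where
  "lin n d p c0 c f v = c0 + (\<Sum>i<n. c i * interp (d i) (\<lambda>j. f i (p i j)) (snd v i))"

lemma sum_aff: "(\<Sum>i\<in>I. c i * ((1 - t) * X i + t * Y i :: real)) = (1 - t) * (\<Sum>i\<in>I. c i * X i) + t * (\<Sum>i\<in>I. c i * Y i)"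
proof -
  have "(\<Sum>i\<in>I. c i * ((1 - t) * X i + t * Y i)) = (\<Sum>i\<in>I. (1 - t) * (c i * X i) + t * (c i * Y i))"
    by (intro sum.cong refl) algebra
  also have "\<dots> = (1 - t) * (\<Sum>i\<in>I. c i * X i) + t * (\<Sum>i\<in>I. c i * Y i)"
    by (simp add: sum.distrib sum_distrib_left)
  finally show ?thesis .
qed

lemma lin_aff: "lin n d p c0 c f (cmb t u w) = (1 - t) * lin n d p c0 c f u + t * lin n d p c0 c f w"
proof -
  have "snd (cmb t u w) i = (\<lambda>j. (1 - t) * snd u i j + t * snd w i j)" for i by (simp add: cmb_def)
  hence "lin n d p c0 c f (cmb t u w) = c0 + (\<Sum>i<n. c i * ((1 - t) * interp (d i) (\<lambda>j. f i (p i j)) (snd u i)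
      + t * interp (d i) (\<lambda>j. f i (p i j)) (snd w i)))"
    unfolding lin_def by (simp add: interp_cmb)
  also have "\<dots> = (1 - t) * lin n d p c0 c f u + t * lin n d p c0 c f w"
    unfolding sum_aff lin_def by (simp add: algebra_simps)
  finally show ?thesis .
qed

lemma interp_scale: "c * interp D q z = q 0 * c + (\<Sum>j=1..D. (q j - q (j - 1)) * (c * z j))"
proof -
  have "(\<Sum>j=1..D. (q j - q (j - 1)) * (c * z j)) = c * (\<Sum>j=1..D. (q j - q (j - 1)) * z j)"
    by (simp add: sum_distrib_left mult.left_commute)
  thus ?thesis unfolding interp_def by (simp add: algebra_simps)
qed

lemma lp_from_relax:
  assumes v: "v \<in> unary_relax n d p m A rhs" and Dp: "lin n d p b0 b f v > 0"
  defines "\<rho> \<equiv> 1 / lin n d p b0 b f v"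
  shows "(\<rho>, \<lambda>i. \<rho> * interp (d i) (\<lambda>j. f i (p i j)) (snd v i), \<lambda>i j. \<rho> * snd v i j, \<lambda>i. \<rho> * fst v i)
           \<in> lp_feasible n d p m A rhs b0 b f"
    and "lp_obj n a0 a (\<rho>, \<lambda>i. \<rho> * interp (d i) (\<lambda>j. f i (p i j)) (snd v i), \<lambda>i j. \<rho> * snd v i j, \<lambda>i. \<rho> * fst v i)
           = \<rho> * lin n d p a0 a f v"
proof -
  have rp: "\<rho> > 0" using Dp \<rho>_def by simp
  have one: "\<rho> * lin n d p b0 b f v = 1" using Dp \<rho>_def by simp
  have xe: "\<forall>i<n. fst v i = interp (d i) (p i) (snd v i)"
    and rows: "\<forall>k<m. rhs k \<le> (\<Sum>i<n. A k i * fst v i)"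
    and ch: "\<forall>i<n. snd v i 1 \<le> 1 \<and> (\<forall>j. 1 \<le> j \<and> j < d i \<longrightarrow> snd v i (Suc j) \<le> snd v i j) \<and> 0 \<le> snd v i (d i)"
    using v unfolding unary_relax_def interp_def by auto
  show "(\<rho>, \<lambda>i. \<rho> * interp (d i) (\<lambda>j. f i (p i j)) (snd v i), \<lambda>i j. \<rho> * snd v i j, \<lambda>i. \<rho> * fst v i)
           \<in> lp_feasible n d p m A rhs b0 b f"
    unfolding lp_feasible_def
  proof (clarify, intro conjI)
    show "b0 * \<rho> + (\<Sum>i<n. b i * (\<rho> * interp (d i) (\<lambda>j. f i (p i j)) (snd v i))) = 1"
      using one unfolding lin_def by (simp add: algebra_simps sum_distrib_left mult.left_commute)
    show "\<forall>i<n. \<rho> * interp (d i) (\<lambda>j. f i (p i j)) (snd v i) =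
        f i (p i 0) * \<rho> + (\<Sum>j = 1..d i. (f i (p i j) - f i (p i (j - 1))) * (\<rho> * snd v i j))"
      by (simp add: interp_scale)
    show "\<forall>i<n. \<rho> * snd v i 1 \<le> \<rho> \<and> (\<forall>j. 1 \<le> j \<and> j < d i \<longrightarrow> \<rho> * snd v i (Suc j) \<le> \<rho> * snd v i j) \<and>
        0 \<le> \<rho> * snd v i (d i)"
      using ch rp by (auto intro: mult_left_mono)
    show "\<forall>k<m. rhs k * \<rho> \<le> (\<Sum>i<n. A k i * (\<rho> * fst v i))"
    proof (intro allI impI)
      fix k assume "k < m"
      hence "rhs k * \<rho> \<le> (\<Sum>i<n. A k i * fst v i) * \<rho>" using rows rp by (simp add: mult_right_mono)
      moreover have "(\<Sum>i<n. A k i * (\<rho> * fst v i)) = (\<Sum>i<n. A k i * fst v i) * \<rho>"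
        by (simp add: sum_distrib_right sum_distrib_left mult_ac)
      ultimately show "rhs k * \<rho> \<le> (\<Sum>i<n. A k i * (\<rho> * fst v i))" by simp
    qed
    show "\<forall>i<n. \<rho> * fst v i = p i 0 * \<rho> + (\<Sum>j = 1..d i. (p i j - p i (j - 1)) * (\<rho> * snd v i j))"
      using xe by (simp add: interp_scale)
  qed
  show "lp_obj n a0 a (\<rho>, \<lambda>i. \<rho> * interp (d i) (\<lambda>j. f i (p i j)) (snd v i), \<lambda>i j. \<rho> * snd v i j, \<lambda>i. \<rho> * fst v i)
           = \<rho> * lin n d p a0 a f v"
    unfolding lp_obj_def lin_def by (simp add: algebra_simps sum_distrib_left mult.left_commute)
qed

lemma relax_from_lp:
  assumes w: "(\<rho>, \<mu>, s, y) \<in> lp_feasible n d p m A rhs b0 b f"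
    and base: "b0 + (\<Sum>i<n. b i * f i (p i 0)) > 0"
  shows "\<rho> > 0 \<and> (\<exists>v\<in>unary_relax n d p m A rhs. \<rho> * lin n d p b0 b f v = 1 \<and>
            lp_obj n a0 a (\<rho>, \<mu>, s, y) = \<rho> * lin n d p a0 a f v)"
proof -
  have sum1: "b0 * \<rho> + (\<Sum>i<n. b i * \<mu> i) = 1"
    and mue: "\<forall>i<n. \<mu> i = f i (p i 0) * \<rho> + (\<Sum>j=1..d i. (f i (p i j) - f i (p i (j - 1))) * s i j)"
    and ch: "\<forall>i<n. \<rho> \<ge> s i 1 \<and> (\<forall>j. 1 \<le> j \<and> j < d i \<longrightarrow> s i j \<ge> s i (Suc j)) \<and> s i (d i) \<ge> 0"
    and rows: "\<forall>k<m. (\<Sum>i<n. A k i * y i) \<ge> rhs k * \<rho>"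
    and ye: "\<forall>i<n. y i = p i 0 * \<rho> + (\<Sum>j=1..d i. (p i j - p i (j - 1)) * s i j)"
    using w unfolding lp_feasible_def by auto
  have rng: "0 \<le> s i j \<and> s i j \<le> \<rho>" if i: "i < n" and j: "1 \<le> j" "j \<le> d i" for i j
  proof -
    have chi: "\<forall>j. 1 \<le> j \<and> j < d i \<longrightarrow> s i (Suc j) \<le> s i j" using ch i by auto
    have "s i j \<le> s i 1" using chain_le[OF chi, of 1 j] j by auto
    moreover have "s i (d i) \<le> s i j" using chain_le[OF chi, of j "d i"] j by auto
    ultimately show ?thesis using ch i by force
  qed
  have rp: "\<rho> > 0"
  proof (rule ccontr)
    assume "\<not> \<rho> > 0"
    hence r0: "\<rho> \<le> 0" by simp
    have "\<mu> i = f i (p i 0) * \<rho>" if i: "i < n" for i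
    proof -
      have "(\<Sum>j=1..d i. (f i (p i j) - f i (p i (j - 1))) * s i j) = 0"
      proof (intro sum.neutral ballI)
        fix j assume "j \<in> {1..d i}"
        hence "s i j = 0" using rng[OF i, of j] r0 by auto
        thus "(f i (p i j) - f i (p i (j - 1))) * s i j = 0" by simp
      qed
      thus ?thesis using mue i by simp
    qed
    hence "1 = \<rho> * (b0 + (\<Sum>i<n. b i * f i (p i 0)))"
      using sum1 by (simp add: algebra_simps sum_distrib_left mult_ac)
    moreover have "\<rho> * (b0 + (\<Sum>i<n. b i * f i (p i 0))) \<le> 0"
      using r0 base by (simp add: mult_nonpos_nonneg)
    ultimately show False by simp
  qed
  define z where "z i j = (if i < n \<and> 1 \<le> j \<and> j \<le> d i then s i j / \<rho> else 0)" for i j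
  define x where "x i = (if i < n then y i / \<rho> else 0)" for i
  have sc: "(\<Sum>j=1..d i. c j * s i j) = \<rho> * (\<Sum>j=1..d i. c j * z i j)" if i: "i < n" for i c
    unfolding sum_distrib_left using i rp by (intro sum.cong) (auto simp: z_def)
  have mu2: "\<mu> i = \<rho> * interp (d i) (\<lambda>j. f i (p i j)) (z i)" if i: "i < n" for i
  proof -
    have "\<mu> i = f i (p i 0) * \<rho> + \<rho> * (\<Sum>j=1..d i. (f i (p i j) - f i (p i (j - 1))) * z i j)"
      using mue i sc[OF i, of "\<lambda>j. f i (p i j) - f i (p i (j - 1))"] by simp
    thus ?thesis unfolding interp_def by (simp add: distrib_left)
  qed
  have y2: "y i = \<rho> * interp (d i) (p i) (z i)" if i: "i < n" for i
  proof -
    have "y i = p i 0 * \<rho> + \<rho> * (\<Sum>j=1..d i. (p i j - p i (j - 1)) * z i j)"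
      using ye i sc[OF i, of "\<lambda>j. p i j - p i (j - 1)"] by simp
    thus ?thesis unfolding interp_def by (simp add: distrib_left)
  qed
  have vR: "(x, z) \<in> unary_relax n d p m A rhs"
    unfolding unary_relax_def
  proof (clarify, intro conjI)
    show "\<forall>k<m. rhs k \<le> (\<Sum>i<n. A k i * x i)"
    proof (intro allI impI)
      fix k assume k: "k < m"
      have "(\<Sum>i<n. A k i * x i) = (\<Sum>i<n. A k i * y i) / \<rho>"
        unfolding sum_divide_distrib x_def by (intro sum.cong) auto
      thus "rhs k \<le> (\<Sum>i<n. A k i * x i)" using rows k rp by (simp add: pos_le_divide_eq)
    qed
    show "\<forall>i<n. x i = p i 0 + (\<Sum>j = 1..d i. (p i j - p i (j - 1)) * z i j)"
      using y2 rp unfolding x_def interp_def by auto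
    show "\<forall>i<n. z i 1 \<le> 1 \<and> (\<forall>j. 1 \<le> j \<and> j < d i \<longrightarrow> z i (Suc j) \<le> z i j) \<and> 0 \<le> z i (d i)"
    proof (intro allI impI conjI)
      fix i assume i: "i < n"
      show "z i 1 \<le> 1" using rng[OF i, of 1] rp by (auto simp: z_def)
      show "0 \<le> z i (d i)" using rng[OF i, of "d i"] rp by (auto simp: z_def)
      fix j assume j: "1 \<le> j \<and> j < d i"
      have "s i (Suc j) \<le> s i j" using ch i j by auto
      thus "z i (Suc j) \<le> z i j" using i j rp by (auto simp: z_def divide_right_mono)
    qed
    show "\<forall>i\<ge>n. x i = 0" by (auto simp: x_def)
    show "\<forall>i j. n \<le> i \<or> j = 0 \<or> d i < j \<longrightarrow> z i j = 0" by (auto simp: z_def)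
  qed
  have "\<rho> * lin n d p b0 b f (x, z) = b0 * \<rho> + (\<Sum>i<n. b i * \<mu> i)"
    unfolding lin_def using mu2 by (simp add: algebra_simps sum_distrib_left mult_ac)
  moreover have "lp_obj n a0 a (\<rho>, \<mu>, s, y) = \<rho> * lin n d p a0 a f (x, z)"
    unfolding lin_def lp_obj_def using mu2 by (simp add: algebra_simps sum_distrib_left mult_ac)
  ultimately show ?thesis using rp vR sum1 by auto
qed

theorem theorem2:
  fixes n m :: nat and d :: "nat \<Rightarrow> nat" and p :: "nat \<Rightarrow> nat \<Rightarrow> real"
    and A :: "nat \<Rightarrow> nat \<Rightarrow> real" and rhs :: "nat \<Rightarrow> real"
    and a0 b0 :: real and a b :: "nat \<Rightarrow> real" and f g :: "nat \<Rightarrow> real \<Rightarrow> real"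
  assumes d_pos: "\<forall>i<n. d i \<ge> 1"
    and p_incr: "\<forall>i<n. \<forall>j<d i. p i j < p i (Suc j)"
    and P_bounded: "\<exists>B. \<forall>x\<in>polyP n m A rhs. \<forall>i<n. \<bar>x i\<bar> \<le> B"
    and b_nonneg: "b0 \<ge> 0" "\<forall>i<n. b i \<ge> 0"
    and denom_pos: "\<forall>x\<in>grid n d p. b0 + (\<Sum>i<n. b i * f i (x i)) > 0"
    and ideal: "unary_ideal n d p m A rhs"
    and g_zero: "\<forall>i<n. \<forall>j\<le>d i. g i (p i j) = 0"
  shows "(polyP n m A rhs \<inter> grid n d p \<noteq> {} \<longleftrightarrow> lp_feasible n d p m A rhs b0 b f \<noteq> {}) \<and>
         (polyP n m A rhs \<inter> grid n d p \<noteq> {} \<longrightarrow>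
            (\<exists>w\<in>lp_feasible n d p m A rhs b0 b f.
               lp_obj n a0 a w = Max (frac_obj n a0 a b0 b f g ` (polyP n m A rhs \<inter> grid n d p)) \<and>
               (\<forall>w'\<in>lp_feasible n d p m A rhs b0 b f. lp_obj n a0 a w' \<le> lp_obj n a0 a w)))"
proof -
  define R where "R = unary_relax n d p m A rhs"
  define G where "G = polyP n m A rhs \<inter> grid n d p"
  define L where "L = lp_feasible n d p m A rhs b0 b f"
  have finG: "finite G" unfolding G_def using finite_grid by auto
  have vex: "\<exists>u. is_vertex R u \<and> \<phi> u \<le> \<phi> v"
    if vR: "v \<in> R" and aff: "\<And>u w t. \<phi> (cmb t u w) = (1 - t) * \<phi> u + t * \<phi> w" for \<phi> v
    unfolding R_def
    by (rule vertex_exists[OF fin_relK relax_eq relQ_aff relg_aff aff relax_bnd])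
       (use vR in \<open>auto simp: R_def\<close>)
  have vg: "fst u \<in> G \<and> (\<forall>c0 c. lin n d p c0 c f u = c0 + (\<Sum>i<n. c i * f i (fst u i)))"
    if u: "is_vertex R u" for u
  proof -
    have uR: "u \<in> unary_relax n d p m A rhs" using u unfolding is_vertex_def R_def by auto
    have bin: "\<forall>i<n. \<forall>j\<in>{1..d i}. snd u i j \<in> {0,1}"
      using ideal u unfolding unary_ideal_def R_def by blast
    note rb = relax_binary_grid[OF uR bin]
    have "interp (d i) (\<lambda>j. f i (p i j)) (snd u i) = f i (fst u i)" if i: "i < n" for i
      using rb(1) i by force
    hence "lin n d p c0 c f u = c0 + (\<Sum>i<n. c i * f i (fst u i))" for c0 c
      unfolding lin_def by simp
    thus ?thesis using rb(2) G_def by auto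
  qed
  have gsum: "(\<Sum>i<n. g i (x i)) = 0" if x: "x \<in> grid n d p" for x
  proof (intro sum.neutral ballI)
    fix i assume "i \<in> {..<n}"
    then obtain j where "j \<le> d i" "x i = p i j" using x unfolding grid_def by auto
    thus "g i (x i) = 0" using g_zero \<open>i \<in> {..<n}\<close> by auto
  qed
  have base: "b0 + (\<Sum>i<n. b i * f i (p i 0)) > 0"
  proof -
    define x0 where "x0 i = (if i < n then p i 0 else 0)" for i
    have "x0 \<in> grid n d p" unfolding grid_def x0_def by auto
    hence "b0 + (\<Sum>i<n. b i * f i (x0 i)) > 0" using denom_pos by auto
    moreover have "(\<Sum>i<n. b i * f i (x0 i)) = (\<Sum>i<n. b i * f i (p i 0))"
      by (intro sum.cong) (auto simp: x0_def)
    ultimately show ?thesis by simp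
  qed
  have fo: "frac_obj n a0 a b0 b f g x = (a0 + (\<Sum>i<n. a i * f i (x i))) / (b0 + (\<Sum>i<n. b i * f i (x i)))"
    if "x \<in> G" for x
    using gsum that unfolding frac_obj_def G_def by auto
  define M where "M = Max (frac_obj n a0 a b0 b f g ` G)"
  have part2: "\<exists>w\<in>L. lp_obj n a0 a w = M \<and> (\<forall>w'\<in>L. lp_obj n a0 a w' \<le> lp_obj n a0 a w)"
    if Gne: "G \<noteq> {}"
  proof -
    have "M \<in> frac_obj n a0 a b0 b f g ` G" unfolding M_def using finG Gne by (intro Max_in) auto
    then obtain xs where xs: "xs \<in> G" "frac_obj n a0 a b0 b f g xs = M" by auto
    obtain z where z: "(xs, z) \<in> R" "\<forall>i<n. \<forall>q. interp (d i) (\<lambda>j. q (p i j)) (z i) = q (xs i)"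
      using grid_to_relax[of xs n d p m A rhs] xs(1) unfolding G_def R_def by auto
    have linx: "lin n d p c0 c f (xs, z) = c0 + (\<Sum>i<n. c i * f i (xs i))" for c0 c
      unfolding lin_def using z(2) by simp
    have dp: "lin n d p b0 b f (xs, z) > 0" using linx denom_pos xs(1) unfolding G_def by auto
    define \<rho> where "\<rho> = 1 / lin n d p b0 b f (xs, z)"
    define w where "w = (\<rho>, \<lambda>i. \<rho> * interp (d i) (\<lambda>j. f i (p i j)) (snd (xs, z) i),
        \<lambda>i j. \<rho> * snd (xs, z) i j, \<lambda>i. \<rho> * fst (xs, z) i)"
    have wL: "w \<in> L" and wo: "lp_obj n a0 a w = \<rho> * lin n d p a0 a f (xs, z)"
      using lp_from_relax[of "(xs, z)" n d p m A rhs b0 b f] z(1) dp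
      unfolding w_def \<rho>_def L_def R_def by auto
    have wM: "lp_obj n a0 a w = M"
      using wo xs fo[OF xs(1)] linx unfolding \<rho>_def by simp
    have "lp_obj n a0 a w' \<le> M" if w': "w' \<in> L" for w'
    proof -
      obtain r mu s y where wq: "w' = (r, mu, s, y)" by (cases w') auto
      obtain v where r0: "r > 0" and vR: "v \<in> R" and v1: "r * lin n d p b0 b f v = 1"
          and vo: "lp_obj n a0 a w' = r * lin n d p a0 a f v"
        using relax_from_lp[of r mu s y n d p m A rhs b0 b f a0 a] w' base unfolding wq L_def R_def by auto
      define \<phi> where "\<phi> v = M * lin n d p b0 b f v - lin n d p a0 a f v" for v
      have aff: "\<phi> (cmb t u w) = (1 - t) * \<phi> u + t * \<phi> w" for u w t
        unfolding \<phi>_def lin_aff by (simp add: algebra_simps)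
      obtain u where u: "is_vertex R u" "\<phi> u \<le> \<phi> v" using vex[OF vR aff] by blast
      note ug = vg[OF u(1)]
      have du: "lin n d p b0 b f u > 0" using ug denom_pos unfolding G_def by auto
      have "frac_obj n a0 a b0 b f g (fst u) \<le> M"
        unfolding M_def using finG ug by (intro Max_ge) auto
      hence "lin n d p a0 a f u / lin n d p b0 b f u \<le> M" using fo ug by simp
      hence "lin n d p a0 a f u \<le> M * lin n d p b0 b f u" using du by (simp add: pos_divide_le_eq)
      hence "0 \<le> \<phi> v" using u(2) unfolding \<phi>_def by linarith
      hence "lin n d p a0 a f v \<le> M * lin n d p b0 b f v" unfolding \<phi>_def by linarith
      hence "r * lin n d p a0 a f v \<le> r * (M * lin n d p b0 b f v)" using r0 by (simp add: mult_left_mono)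
      also have "\<dots> = M" using v1 by (simp add: mult_ac)
      finally show ?thesis using vo by simp
    qed
    thus ?thesis using wL wM by auto
  qed
  have part1: "G \<noteq> {}" if Lne: "L \<noteq> {}"
  proof -
    obtain w where wL: "w \<in> L" using Lne by blast
    obtain r mu s y where "w = (r, mu, s, y)" by (cases w) auto
    hence w': "(r, mu, s, y) \<in> L" using wL by simp
    obtain v where vR: "v \<in> R"
      using relax_from_lp[of r mu s y n d p m A rhs b0 b f] w' base unfolding L_def R_def by blast
    obtain u where u: "is_vertex R u" using vex[OF vR, of "\<lambda>_. 0"] by auto
    thus ?thesis using vg by blast
  qed
  show ?thesis
    using part1 part2 unfolding G_def[symmetric] L_def[symmetric] M_def[symmetric] by blast
qed

end
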